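(* Let $k,\ell\ge1$, $\delta\in(0,1)$. Let $T^{hh}_{k,\ell}$ be the tree obtained from disjoint stars $S_k$ (hub $h_k$, leaves including $a$) and $S_\ell$ (hub $h_\ell$, leaves including $b$) by adding the edge $\{h_k,h_\ell\}$, with $\mathcal H$ its edge set and vertex set $V$. Let $S_m$, $m=k+\ell+1$, be a star with hub $h_m$, leaf $c$, $\mathcal H$ its edge set. Then the bargaining-power components (computed on the whole vertex sets) are $$b^{h_k}_{h_\ell}=\delta+\tfrac23(k+\ell)\delta^2+\tfrac{k\ell}{2}\delta^3\ \text{in }T^{hh}_{k,\ell},\qquad b^{h_m}_{c}=\delta+\tfrac23(k+\ell)\delta^2\ \text{in }S_m,$$ $$b^{h_k}_{a}=\delta+\tfrac{2k}{3}\delta^2+\tfrac{\ell}{2}\delta^3\ \text{in }T^{hh}_{k,\ell},\qquad b^{a}_{b}=\tfrac12\delta^3\ \text{in }T^{hh}_{k,\ell}.$$ In particular $b^{h_k}_{h_\ell}>b^{h_m}_c$, and $b^a_b<b^{h_k}_a$, $b^a_b<b^{h_k}_{h_\ell}$; so in private two-person conferences (no witnesses, $b_{\mathrm{eff}}=b^S_R$) the leaf–leaf conversation $\{a,b\}$ has weakly the most equilibrium partitions.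
   Context: For a finite simple undirected graph $G=(V,E)$ and $\delta\in(0,1)$: $v^G(S):=\sum_{i\in S}\sum_{j\in S,\,j\neq i}\delta^{t_{ij}(G[S])}$ for $S\subseteq V$, where $t_{ij}(G[S])$ is the distance in the induced subgraph ($\infty$ if disconnected, $\delta^\infty:=0$). For a conference structure $\mathcal H$ and $C\subseteq V$, $C/\mathcal H$ is the partition of $C$ into classes connected via chains of pairwise-intersecting members of $\mathcal H$ contained in $C$; $r^{v^G}_{\mathcal H}(C):=\sum_{B\in C/\mathcal H}v^G(B)$; for $X\subseteq V$, $\mathcal H|_X:=\{H\in\mathcal H:H\subseteq X\}$. $\mu_j(X;u)$ denotes the Shapley value of player $j$ in the TU game $u$ on player set $X$. Bargaining-power components: $b^j_i:=\mu_j(V;r^{v^G}_{\mathcal H})-\mu_j(V\setminus\{i\};r^{v^G}_{\mathcal H|_{V\setminus\{i\}}})$. For $b>0$, $N(b)$ denotes the unique integer $N\ge1$ with $\beta(N)\le b<\beta(N-1)$, where $\beta(N)=\frac1{2N(N+1)}$ and $\beta(0)=+\infty$; $N$ is non-increasing in $b$. *)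

theory Defs
  imports Complex_Main
begin

definition is_path :: "nat set set \<Rightarrow> nat set \<Rightarrow> nat list \<Rightarrow> nat \<Rightarrow> nat \<Rightarrow> nat \<Rightarrow> bool" where
  "is_path E S xs i j n \<longleftrightarrow> length xs = Suc n \<and> hd xs = i \<and> last xs = j \<and> set xs \<subseteq> S
     \<and> (\<forall>t<n. {xs ! t, xs ! Suc t} \<in> E)"

definition connected_in :: "nat set set \<Rightarrow> nat set \<Rightarrow> nat \<Rightarrow> nat \<Rightarrow> bool" where
  "connected_in E S i j \<longleftrightarrow> (\<exists>xs n. is_path E S xs i j n)"

definition dist_in :: "nat set set \<Rightarrow> nat set \<Rightarrow> nat \<Rightarrow> nat \<Rightarrow> nat" where
  "dist_in E S i j = (LEAST n. \<exists>xs. is_path E S xs i j n)"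

definition dpow :: "real \<Rightarrow> nat set set \<Rightarrow> nat set \<Rightarrow> nat \<Rightarrow> nat \<Rightarrow> real" where
  "dpow \<delta> E S i j = (if connected_in E S i j then \<delta> ^ dist_in E S i j else 0)"

definition vG :: "real \<Rightarrow> nat set set \<Rightarrow> nat set \<Rightarrow> real" where
  "vG \<delta> E S = (\<Sum>i\<in>S. \<Sum>j\<in>S - {i}. dpow \<delta> E S i j)"

(* C/H: classes of C connected via chains of pairwise intersecting members of H contained in C *)
definition conf_rel :: "nat set set \<Rightarrow> nat set \<Rightarrow> (nat \<times> nat) set" where
  "conf_rel H C = (Id_on C \<union> {(x, y). \<exists>h\<in>H. h \<subseteq> C \<and> x \<in> h \<and> y \<in> h})\<^sup>*"

definition conf_partition :: "nat set set \<Rightarrow> nat set \<Rightarrow> nat set set" where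
  "conf_partition H C = C // conf_rel H C"

definition rH :: "real \<Rightarrow> nat set set \<Rightarrow> nat set set \<Rightarrow> nat set \<Rightarrow> real" where
  "rH \<delta> E H C = (\<Sum>B\<in>conf_partition H C. vG \<delta> E B)"

definition restrict_conf :: "nat set set \<Rightarrow> nat set \<Rightarrow> nat set set" where
  "restrict_conf H X = {h \<in> H. h \<subseteq> X}"

definition shapley :: "nat set \<Rightarrow> (nat set \<Rightarrow> real) \<Rightarrow> nat \<Rightarrow> real" where
  "shapley X u j = (\<Sum>S\<in>Pow (X - {j}).
      (fact (card S) * fact (card X - card S - 1) / fact (card X)) * (u (insert j S) - u S))"

definition bpower :: "real \<Rightarrow> nat set set \<Rightarrow> nat set set \<Rightarrow> nat set \<Rightarrow> nat \<Rightarrow> nat \<Rightarrow> real" where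
  "bpower \<delta> E H V j i =
     shapley V (rH \<delta> E H) j - shapley (V - {i}) (rH \<delta> E (restrict_conf H (V - {i}))) j"

(* T^{hh}_{k,l}: hub h_k = 0, hub h_l = 1, leaves of S_k are 2..k+1, leaves of S_l are k+2..k+l+1 *)
definition treeV :: "nat \<Rightarrow> nat \<Rightarrow> nat set" where
  "treeV k l = {0..<k + l + 2}"

definition treeE :: "nat \<Rightarrow> nat \<Rightarrow> nat set set" where
  "treeE k l = {{0, 1}} \<union> {{0, i} | i. i \<in> {2..<k + 2}} \<union> {{1, i} | i. i \<in> {k + 2..<k + l + 2}}"

definition starV :: "nat \<Rightarrow> nat set" where
  "starV m = {0..m}"

definition starE :: "nat \<Rightarrow> nat set set" where
  "starE m = {{0, i} | i. i \<in> {1..m}}"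

definition beta :: "nat \<Rightarrow> real" where
  "beta N = 1 / (2 * real N * (real N + 1))"

definition Nb :: "real \<Rightarrow> nat" where
  "Nb b = (THE N. N \<ge> 1 \<and> beta N \<le> b \<and> (N = 1 \<or> b < beta (N - 1)))"

end

theory Submission
  imports Defs
begin



lemma shapley_cong:
  assumes "j \<in> X" "\<And>S. S \<subseteq> X \<Longrightarrow> u S = u' S"
  shows "shapley X u j = shapley X u' j"
  unfolding shapley_def
proof (rule sum.cong[OF refl])
  fix S assume "S \<in> Pow (X - {j})"
  then have "S \<subseteq> X" "insert j S \<subseteq> X" using assms(1) by auto
  then show "fact (card S) * fact (card X - card S - 1) / fact (card X) * (u (insert j S) - u S) =
         fact (card S) * fact (card X - card S - 1) / fact (card X) * (u' (insert j S) - u' S)"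
    using assms(2) by simp
qed

lemma shapley_sum:
  "shapley X (\<lambda>S. \<Sum>p\<in>I. f p S) j = (\<Sum>p\<in>I. shapley X (f p) j)"
  unfolding shapley_def
  by (simp add: sum_subtractf[symmetric] sum_distrib_left sum.swap[of _ I])

lemma shapley_scale:
  "shapley X (\<lambda>S. c * f S) j = c * shapley X f j"
  unfolding shapley_def
  by (simp add: sum_distrib_left algebra_simps)

lemma sum_Pow_card:
  assumes "finite A"
  shows "(\<Sum>R\<in>Pow A. g (card R)) = (\<Sum>r\<le>card A. of_nat (card A choose r) * g r)"
proof -
  have "(\<Sum>R\<in>Pow A. g (card R)) = (\<Sum>r\<le>card A. \<Sum>R\<in>{R. R \<in> Pow A \<and> card R = r}. g (card R))"
    by (rule sum.group[symmetric]) (use assms card_mono in auto)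
  also have "\<dots> = (\<Sum>r\<le>card A. of_nat (card A choose r) * g r)"
  proof (rule sum.cong[OF refl])
    fix r
    have "(\<Sum>R\<in>{R. R \<in> Pow A \<and> card R = r}. g (card R)) = (\<Sum>R\<in>{R. R \<subseteq> A \<and> card R = r}. g r)"
      by (rule sum.cong) auto
    also have "\<dots> = of_nat (card A choose r) * g r"
      using n_subsets[OF assms, of r] by simp
    finally show "(\<Sum>R\<in>{R. R \<in> Pow A \<and> card R = r}. g (card R)) = of_nat (card A choose r) * g r" .
  qed
  finally show ?thesis .
qed

lemma unanimity_out:
  assumes "j \<notin> T"
  shows "shapley X (\<lambda>S. if T \<subseteq> S then 1 else 0) j = 0"
  unfolding shapley_def
  by (rule sum.neutral) (use assms in \<open>auto simp: subset_insert\<close>)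

lemma unanimity_in:
  assumes X: "finite X" and TX: "T \<subseteq> X" and jT: "j \<in> T"
  shows "shapley X (\<lambda>S. if T \<subseteq> S then 1 else 0) j = 1 / card T"
proof -
  define n where "n = card X"
  define t where "t = card T"
  define m where "m = card (X - T)"
  define T' where "T' = T - {j}"
  have fT: "finite T" using X TX finite_subset by blast
  have t1: "t \<ge> 1" using jT fT t_def by (metis One_nat_def Suc_leI card_gt_0_iff empty_iff)
  have nm: "n = t + m" unfolding n_def t_def m_def using X TX
    by (metis add.commute card_Diff_subset finite_subset le_add_diff_inverse card_mono)
  have cT': "card T' = t - 1" using jT fT unfolding T'_def t_def by simp
  define w where "w = (\<lambda>s::nat. (fact s * fact (n - s - 1) / fact n :: real))"
  have "shapley X (\<lambda>S. if T \<subseteq> S then 1 else 0) j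
      = (\<Sum>S\<in>Pow (X - {j}). (if T' \<subseteq> S then w (card S) else 0))"
    unfolding shapley_def n_def w_def
  proof (rule sum.cong[OF refl])
    fix S assume "S \<in> Pow (X - {j})"
    then have jS: "j \<notin> S" by auto
    have "(T \<subseteq> insert j S) = (T' \<subseteq> S)" unfolding T'_def using jT by auto
    moreover have "\<not> T \<subseteq> S" using jS jT by auto
    ultimately show "fact (card S) * fact (card X - card S - 1) / fact (card X) * (
         (if T \<subseteq> insert j S then 1 else 0) - (if T \<subseteq> S then 1 else 0)) =
         (if T' \<subseteq> S then fact (card S) * fact (card X - card S - 1) / fact (card X) else (0::real))"
      by simp
  qed
  also have "\<dots> = (\<Sum>S\<in>{S\<in>Pow (X - {j}). T' \<subseteq> S}. w (card S))"
    by (simp add: sum.inter_filter[symmetric] X)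
  also have "\<dots> = (\<Sum>R\<in>Pow (X - T). w (card (T' \<union> R)))"
  proof -
    have "inj_on (\<lambda>R. T' \<union> R) (Pow (X - T))" unfolding inj_on_def T'_def by auto
    moreover have "(\<lambda>R. T' \<union> R) ` Pow (X - T) = {S\<in>Pow (X - {j}). T' \<subseteq> S}"
    proof
      show "(\<lambda>R. T' \<union> R) ` Pow (X - T) \<subseteq> {S\<in>Pow (X - {j}). T' \<subseteq> S}"
        unfolding T'_def using TX jT by auto
      show "{S\<in>Pow (X - {j}). T' \<subseteq> S} \<subseteq> (\<lambda>R. T' \<union> R) ` Pow (X - T)"
      proof
        fix S assume S: "S \<in> {S\<in>Pow (X - {j}). T' \<subseteq> S}"
        then have "S = T' \<union> (S - T)" "S - T \<in> Pow (X - T)" unfolding T'_def by auto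
        then show "S \<in> (\<lambda>R. T' \<union> R) ` Pow (X - T)" by blast
      qed
    qed
    ultimately show ?thesis by (metis (no_types, lifting) sum.reindex_cong)
  qed
  also have "\<dots> = (\<Sum>R\<in>Pow (X - T). w (t - 1 + card R))"
  proof (rule sum.cong[OF refl])
    fix R assume "R \<in> Pow (X - T)"
    then have "finite R" "T' \<inter> R = {}" using X finite_subset unfolding T'_def by auto
    then show "w (card (T' \<union> R)) = w (t - 1 + card R)"
      using card_Un_disjoint[of T' R] fT cT' unfolding T'_def by simp
  qed
  also have "\<dots> = (\<Sum>r\<le>m. of_nat (m choose r) * w (t - 1 + r))"
    using sum_Pow_card[of "X - T" "\<lambda>s. w (t - 1 + s)"] X unfolding m_def by simp
  also have "\<dots> = (\<Sum>r\<le>m. fact m * fact (t - 1) / fact n * of_nat ((t - 1 + r) choose r))"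
  proof (rule sum.cong[OF refl])
    fix r assume "r \<in> {..m}"
    then have rm: "r \<le> m" by simp
    have e1: "n - (t - 1 + r) - 1 = m - r" using nm t1 by simp
    have b1: "(of_nat (m choose r) :: real) = fact m / (fact r * fact (m - r))"
      using binomial_fact[OF rm] by simp
    have b2: "(of_nat ((t - 1 + r) choose r) :: real) = fact (t - 1 + r) / (fact r * fact (t - 1))"
      using binomial_fact[of r "t - 1 + r"] by simp
    show "of_nat (m choose r) * w (t - 1 + r) = fact m * fact (t - 1) / fact n * of_nat ((t - 1 + r) choose r)"
      unfolding w_def e1 b1 b2 by (simp add: field_simps)
  qed
  also have "\<dots> = fact m * fact (t - 1) / fact n * of_nat (\<Sum>r\<le>m. (t - 1 + r) choose r)"
    by (simp add: sum_distrib_left)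
  also have "(\<Sum>r\<le>m. (t - 1 + r) choose r) = n choose m"
    using sum_choose_lower[of "t - 1" m] nm t1 by simp
  also have "(of_nat (n choose m) :: real) = fact n / (fact m * fact t)"
    using binomial_fact[of m n] nm by simp
  also have "fact m * fact (t - 1) / fact n * (fact n / (fact m * fact t)) = (fact (t - 1) / fact t :: real)"
    by (simp add: field_simps)
  also have "\<dots> = 1 / t"
    using t1 fact_reduce[of t] by (simp add: field_simps)
  finally show ?thesis unfolding t_def .
qed




lemma is_path_mono: "is_path E S xs i j n \<Longrightarrow> S \<subseteq> S' \<Longrightarrow> is_path E S' xs i j n"
  unfolding is_path_def by auto

lemma is_path_snoc:
  assumes "is_path E S xs x y n" "{y, z} \<in> E" "z \<in> S"
  shows "is_path E S (xs @ [z]) x z (Suc n)"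
proof -
  have len: "length xs = Suc n" and hd: "hd xs = x" and la: "last xs = y" and sub: "set xs \<subseteq> S"
    and st: "\<forall>t<n. {xs ! t, xs ! Suc t} \<in> E" using assms(1) unfolding is_path_def by auto
  have ne: "xs \<noteq> []" using len by auto
  have "xs ! n = y" using la ne len by (simp add: last_conv_nth)
  have "\<forall>t<Suc n. {(xs @ [z]) ! t, (xs @ [z]) ! Suc t} \<in> E"
  proof (intro allI impI)
    fix t assume "t < Suc n"
    then consider "t < n" | "t = n" by linarith
    then show "{(xs @ [z]) ! t, (xs @ [z]) ! Suc t} \<in> E"
    proof cases
      case 1 then show ?thesis using st len by (simp add: nth_append)
    next
      case 2 then show ?thesis using \<open>xs ! n = y\<close> assms(2) len by (simp add: nth_append)
    qed
  qed
  then show ?thesis unfolding is_path_def using len hd ne sub assms(3) by simp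
qed

lemma path_rel:
  assumes "is_path E S xs x y n"
  shows "\<forall>t\<le>n. (x, xs ! t) \<in> conf_rel E S"
proof (intro allI impI)
  fix t assume "t \<le> n"
  then show "(x, xs ! t) \<in> conf_rel E S"
  proof (induction t)
    case 0
    have "xs \<noteq> []" "hd xs = x" using assms unfolding is_path_def by auto
    then have "xs ! 0 = x" by (simp add: hd_conv_nth)
    then show ?case unfolding conf_rel_def by simp
  next
    case (Suc t)
    have len: "length xs = Suc n" and sub: "set xs \<subseteq> S"
      and st: "\<forall>t<n. {xs ! t, xs ! Suc t} \<in> E" using assms unfolding is_path_def by auto
    have tn: "t < n" using Suc.prems by simp
    have e: "{xs ! t, xs ! Suc t} \<in> E" using st tn by simp
    have "xs ! t \<in> set xs" "xs ! Suc t \<in> set xs" using len tn by simp_all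
    then have "xs ! t \<in> S" "xs ! Suc t \<in> S" using sub by blast+
    then have "{xs ! t, xs ! Suc t} \<subseteq> S" by simp
    then have "(xs ! t, xs ! Suc t) \<in> {(x, y). \<exists>h\<in>E. h \<subseteq> S \<and> x \<in> h \<and> y \<in> h}"
      using e by (simp only: mem_Collect_eq case_prod_conv) (rule bexI[of _ "{xs ! t, xs ! Suc t}"], simp_all)
    then have "(xs ! t, xs ! Suc t) \<in> Id_on S \<union> {(x, y). \<exists>h\<in>E. h \<subseteq> S \<and> x \<in> h \<and> y \<in> h}"
      by (rule UnI2)
    moreover have "(x, xs ! t) \<in> conf_rel E S" using Suc by simp
    ultimately show ?case unfolding conf_rel_def by (rule rtrancl.rtrancl_into_rtrancl[rotated])
  qed
qed

lemma path_set_rel: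
  assumes "is_path E S xs x y n"
  shows "set xs \<subseteq> conf_rel E S `` {x}" "(x, y) \<in> conf_rel E S"
proof -
  have len: "length xs = Suc n" and la: "last xs = y" using assms unfolding is_path_def by auto
  show "set xs \<subseteq> conf_rel E S `` {x}"
  proof
    fix w assume "w \<in> set xs"
    then obtain t where "t < length xs" "w = xs ! t" by (metis in_set_conv_nth)
    then show "w \<in> conf_rel E S `` {x}" using path_rel[OF assms] len by auto
  qed
  have "xs ! n = y" using la len by (metis diff_Suc_1 last_conv_nth list.size(3) nat.distinct(1))
  then show "(x, y) \<in> conf_rel E S" using path_rel[OF assms] by auto
qed

lemma rel_path:
  assumes Eform: "\<And>e. e \<in> E \<Longrightarrow> \<exists>p q. e = {p, q}"
  assumes "(x, y) \<in> conf_rel E S" "x \<in> S"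
  shows "\<exists>xs n. is_path E S xs x y n"
  using assms(2) unfolding conf_rel_def
proof (induction rule: rtrancl_induct)
  case base
  have "is_path E S [x] x x 0" unfolding is_path_def using assms(3) by simp
  then show ?case by blast
next
  case (step y z)
  then obtain xs n where p: "is_path E S xs x y n" by blast
  from step(2) consider "z = y" | h where "h \<in> E" "h \<subseteq> S" "y \<in> h" "z \<in> h" by auto
  then show ?case
  proof cases
    case 1 then show ?thesis using p by blast
  next
    case 2
    show ?thesis
    proof (cases "z = y")
      case True then show ?thesis using p by blast
    next
      case False
      obtain p q where "h = {p, q}" using Eform 2(1) by blast
      then have "h = {y, z}" using 2 False by auto
      then show ?thesis using is_path_snoc[OF p, of z] 2 by blast
    qed
  qed
qed

lemma rel_in_S:
  assumes "(x, y) \<in> conf_rel E S" "x \<in> S"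
  shows "y \<in> S"
  using assms unfolding conf_rel_def
  by (induction rule: rtrancl_induct) auto

lemma sym_conf_rel: "sym (conf_rel E S)"
  unfolding conf_rel_def by (rule sym_rtrancl) (auto simp: sym_def)

lemma conf_rel_class_eq:
  assumes "(x, w) \<in> conf_rel E S"
  shows "conf_rel E S `` {x} = conf_rel E S `` {w}"
proof -
  have tr: "trans (conf_rel E S)" unfolding conf_rel_def by (rule trans_rtrancl)
  have sy: "sym (conf_rel E S)" by (rule sym_conf_rel)
  show ?thesis using assms tr sy unfolding trans_def sym_def by blast
qed

lemma dpow_class:
  assumes "x \<in> S" "y \<in> conf_rel E S `` {x}" "z \<in> conf_rel E S `` {x}"
  shows "dpow \<delta> E (conf_rel E S `` {x}) y z = dpow \<delta> E S y z"
proof -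
  let ?B = "conf_rel E S `` {x}"
  have BS: "?B \<subseteq> S" using rel_in_S assms(1) by blast
  have eqB: "?B = conf_rel E S `` {y}" using assms(2) conf_rel_class_eq by auto
  have iff: "\<And>xs n. is_path E ?B xs y z n \<longleftrightarrow> is_path E S xs y z n"
  proof
    fix xs n assume "is_path E ?B xs y z n" then show "is_path E S xs y z n" using is_path_mono BS by blast
  next
    fix xs n assume p: "is_path E S xs y z n"
    then have "set xs \<subseteq> ?B" using path_set_rel(1)[OF p] eqB by simp
    then show "is_path E ?B xs y z n" using p unfolding is_path_def by auto
  qed
  show ?thesis unfolding dpow_def connected_in_def dist_in_def iff ..
qed

lemma rH_eq_vG:
  assumes Eform: "\<And>e. e \<in> E \<Longrightarrow> \<exists>p q. e = {p, q}" and fS: "finite S"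
  shows "rH \<delta> E E S = vG \<delta> E S"
proof -
  let ?r = "conf_rel E S"
  define F where "F = (\<lambda>y. \<Sum>z\<in>S - {y}. dpow \<delta> E S y z)"
  have Q2: "\<Union> (S // ?r) = S"
  proof
    show "\<Union> (S // ?r) \<subseteq> S" using rel_in_S unfolding quotient_def by blast
    show "S \<subseteq> \<Union> (S // ?r)" unfolding quotient_def conf_rel_def by blast
  qed
  have fQ: "finite (S // ?r)" using fS unfolding quotient_def by simp
  have Q3: "\<forall>A\<in>S // ?r. \<forall>B\<in>S // ?r. A \<noteq> B \<longrightarrow> A \<inter> B = {}"
  proof (intro ballI impI)
    fix A B assume A: "A \<in> S // ?r" and B: "B \<in> S // ?r" and ne: "A \<noteq> B"
    obtain x1 where x1: "A = ?r `` {x1}" using A unfolding quotient_def by blast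
    obtain x2 where x2: "B = ?r `` {x2}" using B unfolding quotient_def by blast
    show "A \<inter> B = {}"
    proof (rule ccontr)
      assume "A \<inter> B \<noteq> {}"
      then obtain w where "(x1, w) \<in> ?r" "(x2, w) \<in> ?r" using x1 x2 by blast
      then have "A = B" using x1 x2 conf_rel_class_eq by metis
      then show False using ne by simp
    qed
  qed
  have fin: "\<forall>B\<in>S // ?r. finite B"
  proof
    fix B assume "B \<in> S // ?r"
    then have "B \<subseteq> S" using Q2 by blast
    then show "finite B" using fS finite_subset by blast
  qed
  have "vG \<delta> E S = (\<Sum>y\<in>S. F y)" unfolding vG_def F_def ..
  also have "\<dots> = (\<Sum>B\<in>S // ?r. \<Sum>y\<in>B. F y)"
    using sum.Union_disjoint[of "S // ?r" F] fin Q3 Q2 by (simp add: pairwise_def disjnt_def)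
  also have "\<dots> = (\<Sum>B\<in>S // ?r. vG \<delta> E B)"
  proof (rule sum.cong[OF refl])
    fix B assume B: "B \<in> S // ?r"
    obtain x where x: "x \<in> S" "B = ?r `` {x}" using B unfolding quotient_def by blast
    have BS: "B \<subseteq> S" using rel_in_S x by blast
    show "(\<Sum>y\<in>B. F y) = vG \<delta> E B" unfolding vG_def
    proof (rule sum.cong[OF refl])
      fix y assume y: "y \<in> B"
      have "F y = (\<Sum>z\<in>B - {y}. dpow \<delta> E S y z)"
        unfolding F_def
      proof (rule sum.mono_neutral_right)
        show "finite (S - {y})" using fS by simp
        show "B - {y} \<subseteq> S - {y}" using BS by auto
        show "\<forall>z\<in>S - {y} - (B - {y}). dpow \<delta> E S y z = 0"
        proof
          fix z assume z: "z \<in> S - {y} - (B - {y})"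
          have "\<not> connected_in E S y z"
          proof
            assume "connected_in E S y z"
            then obtain xs n where "is_path E S xs y z n" unfolding connected_in_def by blast
            then have "(y, z) \<in> ?r" using path_set_rel by blast
            then have "z \<in> B" using y x conf_rel_class_eq by blast
            then show False using z by simp
          qed
          then show "dpow \<delta> E S y z = 0" unfolding dpow_def by simp
        qed
      qed
      also have "\<dots> = (\<Sum>z\<in>B - {y}. dpow \<delta> E B y z)"
        using dpow_class[OF x(1)] x(2) y by (intro sum.cong) auto
      finally show "F y = (\<Sum>z\<in>B - {y}. dpow \<delta> E B y z)" .
    qed
  qed
  finally have "vG \<delta> E S = rH \<delta> E E S" unfolding rH_def conf_partition_def .
  then show ?thesis by simp
qed

lemma conf_rel_restrict:
  assumes "S \<subseteq> X"
  shows "conf_rel (restrict_conf H X) S = conf_rel H S"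
  unfolding conf_rel_def restrict_conf_def using assms by (intro arg_cong[where f=rtrancl] arg_cong2[where f="(\<union>)"] refl) blast

lemma rH_restrict:
  assumes "S \<subseteq> X"
  shows "rH \<delta> E (restrict_conf H X) S = rH \<delta> E H S"
  unfolding rH_def conf_partition_def conf_rel_restrict[OF assms] ..




lemma path2: "{a, b} \<in> E \<Longrightarrow> is_path E {a, b} [a, b] a b 1"
  unfolding is_path_def by simp
lemma path3: "{a, b} \<in> E \<Longrightarrow> {b, c} \<in> E \<Longrightarrow> is_path E {a, b, c} [a, b, c] a c 2"
  unfolding is_path_def by (auto simp: less_Suc_eq numeral_2_eq_2)
lemma path4: "{a, b} \<in> E \<Longrightarrow> {b, c} \<in> E \<Longrightarrow> {c, d} \<in> E \<Longrightarrow> is_path E {a, b, c, d} [a, b, c, d] a d 3"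
  unfolding is_path_def by (auto simp: less_Suc_eq numeral_3_eq_3)

definition UG :: "nat set \<Rightarrow> nat set \<Rightarrow> real" where
  "UG T S = (if T \<subseteq> S then 1 else 0)"

locale hubgraph =
  fixes V :: "nat set" and E :: "nat set set" and h :: "nat \<Rightarrow> nat"
  assumes finV: "finite V"
    and hV: "\<And>x. x \<in> V \<Longrightarrow> h x \<in> V"
    and hh: "\<And>x. x \<in> V \<Longrightarrow> h (h x) = h x"
    and Eform: "\<And>e. e \<in> E \<Longrightarrow> \<exists>p q. e = {p, q}"
    and Eiff: "\<And>p q. {p, q} \<in> E \<longleftrightarrow> p \<noteq> q \<and> p \<in> V \<and> q \<in> V \<and> (q = h p \<or> p = h q \<or> (h p = p \<and> h q = q))"
begin

definition P :: "nat \<Rightarrow> nat \<Rightarrow> nat set" where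
  "P x y = {x, h x, h y, y}"

lemma P_sub: "x \<in> V \<Longrightarrow> y \<in> V \<Longrightarrow> P x y \<subseteq> V"
  unfolding P_def using hV by auto

lemma walk_contains:
  assumes xV: "x \<in> V" and yV: "y \<in> V" and xy: "x \<noteq> y" and p: "is_path E S xs x y n"
  shows "P x y \<subseteq> set xs"
proof -
  have len: "length xs = Suc n" and hd: "hd xs = x" and la: "last xs = y"
    and st: "\<forall>t<n. {xs ! t, xs ! Suc t} \<in> E" using p unfolding is_path_def by auto
  have ne: "xs \<noteq> []" using len by auto
  have x0: "xs ! 0 = x" using hd ne by (simp add: hd_conv_nth)
  have yn: "xs ! n = y" using la ne len by (simp add: last_conv_nth)
  have n0: "n \<noteq> 0"
  proof
    assume "n = 0" then show False using x0 yn xy by simp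
  qed
  have xin: "x \<in> set xs" using hd ne by auto
  have yin: "y \<in> set xs" using la ne by auto
  have hxin: "h x \<in> set xs"
  proof (cases "h x = x")
    case True then show ?thesis using xin by simp
  next
    case False
    have "0 < n" using n0 by simp
    then have e: "{x, xs ! 1} \<in> E" using st x0 by (metis One_nat_def)
    then have E1: "x \<noteq> xs ! 1 \<and> x \<in> V \<and> xs ! 1 \<in> V \<and> (xs ! 1 = h x \<or> x = h (xs ! 1) \<or> (h x = x \<and> h (xs ! 1) = xs ! 1))"
      using Eiff[of x "xs ! 1"] by simp
    then have qV: "xs ! 1 \<in> V" by simp
    have "xs ! 1 = h x"
    proof -
      have "x \<noteq> h (xs ! 1)"
      proof
        assume "x = h (xs ! 1)"
        then have "h x = x" using hh[OF qV] by simp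
        then show False using False by simp
      qed
      then show ?thesis using False E1 by auto
    qed
    moreover have "xs ! 1 \<in> set xs" using len n0 by simp
    ultimately show ?thesis by simp
  qed
  have hyin: "h y \<in> set xs"
  proof (cases "h y = y")
    case True then show ?thesis using yin by simp
  next
    case False
    have nn: "n - 1 < n" "Suc (n - 1) = n" using n0 by auto
    then have e: "{xs ! (n - 1), y} \<in> E" using st yn by metis
    define q where "q = xs ! (n - 1)"
    have E1: "q \<noteq> y \<and> q \<in> V \<and> y \<in> V \<and> (y = h q \<or> q = h y \<or> (h q = q \<and> h y = y))"
      using Eiff[of q y] e unfolding q_def by simp
    then have qV: "q \<in> V" by simp
    have "q = h y"
    proof -
      have "y \<noteq> h q"
      proof
        assume "y = h q"
        then have "h y = y" using hh[OF qV] by simp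
        then show False using False by simp
      qed
      then show ?thesis using False E1 by auto
    qed
    then have "xs ! (n - 1) = h y" unfolding q_def .
    moreover have "xs ! (n - 1) \<in> set xs" using len by simp
    ultimately show ?thesis by simp
  qed
  show ?thesis unfolding P_def using xin yin hxin hyin by auto
qed

lemma walk_exists:
  assumes xV: "x \<in> V" and yV: "y \<in> V" and xy: "x \<noteq> y"
  shows "\<exists>xs. is_path E (P x y) xs x y (card (P x y) - 1)"
proof -
  have hxV: "h x \<in> V" and hyV: "h y \<in> V" using hV xV yV by auto
  have hhx: "h (h x) = h x" and hhy: "h (h y) = h y" using hh xV yV by auto
  consider (a) "h x = x" "h y = y" | (b) "h x = x" "h y \<noteq> y" "h x = h y"
    | (c) "h x = x" "h y \<noteq> y" "h x \<noteq> h y"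
    | (d) "h x \<noteq> x" "h y = y" "h x = h y" | (e) "h x \<noteq> x" "h y = y" "h x \<noteq> h y"
    | (f) "h x \<noteq> x" "h y \<noteq> y" "h x = h y" | (g) "h x \<noteq> x" "h y \<noteq> y" "h x \<noteq> h y"
    by blast
  then show ?thesis
  proof cases
    case a
    then have "P x y = {x, y}" unfolding P_def by auto
    moreover have "{x, y} \<in> E" unfolding Eiff using a xV yV xy by auto
    ultimately show ?thesis using path2[of x y E] xy by auto
  next
    case b
    then have "P x y = {x, y}" unfolding P_def by auto
    moreover have "{x, y} \<in> E" unfolding Eiff using b xV yV xy by auto
    ultimately show ?thesis using path2[of x y E] xy by auto
  next
    case c
    then have "P x y = {x, h y, y}" unfolding P_def by auto
    moreover have "{x, h y} \<in> E" unfolding Eiff using c xV hyV hhy by auto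
    moreover have "{h y, y} \<in> E" unfolding Eiff using c yV hyV by auto
    moreover have "card {x, h y, y} = 3" using c xy by auto
    ultimately show ?thesis using path3[of x "h y" E y] by auto
  next
    case d
    then have "P x y = {x, y}" unfolding P_def by auto
    moreover have "{x, y} \<in> E" unfolding Eiff using d xV yV xy by auto
    ultimately show ?thesis using path2[of x y E] xy by auto
  next
    case e
    then have "P x y = {x, h x, y}" unfolding P_def by auto
    moreover have "{x, h x} \<in> E" unfolding Eiff using e xV hxV by auto
    moreover have "{h x, y} \<in> E" unfolding Eiff using e yV hxV hhx by auto
    moreover have "card {x, h x, y} = 3" using e xy by auto
    ultimately show ?thesis using path3[of x "h x" E y] by auto
  next
    case f
    then have "P x y = {x, h x, y}" unfolding P_def by auto
    moreover have "{x, h x} \<in> E" unfolding Eiff using f xV hxV by auto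
    moreover have "{h x, y} \<in> E" unfolding Eiff using f yV hxV by auto
    moreover have "card {x, h x, y} = 3" using f xy by auto
    ultimately show ?thesis using path3[of x "h x" E y] by auto
  next
    case g
    have "x \<noteq> h y" using g hhy by metis
    moreover have "y \<noteq> h x" using g hhx by metis
    ultimately have "card {x, h x, h y, y} = 4" using g xy by auto
    moreover have "{x, h x} \<in> E" unfolding Eiff using g xV hxV by auto
    moreover have "{h x, h y} \<in> E" unfolding Eiff using g hxV hyV hhx hhy by auto
    moreover have "{h y, y} \<in> E" unfolding Eiff using g yV hyV by auto
    ultimately show ?thesis using path4[of x "h x" E "h y" y] unfolding P_def by auto
  qed
qed

lemma dpow_formula:
  assumes xV: "x \<in> V" and yV: "y \<in> V" and xy: "x \<noteq> y"
  shows "dpow \<delta> E S x y = \<delta> ^ (card (P x y) - 1) * UG (P x y) S"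
proof (cases "P x y \<subseteq> S")
  case True
  obtain xs where p: "is_path E (P x y) xs x y (card (P x y) - 1)" using walk_exists[OF assms] by blast
  then have pS: "is_path E S xs x y (card (P x y) - 1)" using is_path_mono True by blast
  then have c: "connected_in E S x y" unfolding connected_in_def by blast
  have "dist_in E S x y = card (P x y) - 1"
    unfolding dist_in_def
  proof (rule Least_equality)
    show "\<exists>xs. is_path E S xs x y (card (P x y) - 1)" using pS by blast
    fix n assume "\<exists>xs. is_path E S xs x y n"
    then obtain ys where q: "is_path E S ys x y n" by blast
    have "P x y \<subseteq> set ys" using walk_contains[OF xV yV xy q] .
    then have "card (P x y) \<le> card (set ys)" by (simp add: card_mono)
    also have "\<dots> \<le> length ys" by (rule card_length)
    also have "\<dots> = Suc n" using q unfolding is_path_def by simp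
    finally show "card (P x y) - 1 \<le> n" by simp
  qed
  then show ?thesis unfolding dpow_def UG_def using c True by simp
next
  case False
  have "\<not> connected_in E S x y"
  proof
    assume "connected_in E S x y"
    then obtain xs n where q: "is_path E S xs x y n" unfolding connected_in_def by blast
    then have "set xs \<subseteq> S" unfolding is_path_def by simp
    then show False using walk_contains[OF xV yV xy q] False by blast
  qed
  then show ?thesis unfolding dpow_def UG_def using False by simp
qed

lemma vG_formula:
  assumes SV: "S \<subseteq> V"
  shows "vG \<delta> E S = (\<Sum>x\<in>V. \<Sum>y\<in>V - {x}. \<delta> ^ (card (P x y) - 1) * UG (P x y) S)"
proof -
  have fS: "finite S" using finV SV finite_subset by blast
  have "vG \<delta> E S = (\<Sum>x\<in>S. \<Sum>y\<in>S - {x}. \<delta> ^ (card (P x y) - 1) * UG (P x y) S)"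
    unfolding vG_def using SV by (intro sum.cong refl dpow_formula) auto
  also have "\<dots> = (\<Sum>x\<in>S. \<Sum>y\<in>V - {x}. \<delta> ^ (card (P x y) - 1) * UG (P x y) S)"
  proof (rule sum.cong[OF refl], rule sum.mono_neutral_left)
    fix x assume "x \<in> S"
    show "finite (V - {x})" using finV by simp
    show "S - {x} \<subseteq> V - {x}" using SV by auto
    show "\<forall>y\<in>V - {x} - (S - {x}). \<delta> ^ (card (P x y) - 1) * UG (P x y) S = 0"
      unfolding UG_def P_def by auto
  qed
  also have "\<dots> = (\<Sum>x\<in>V. \<Sum>y\<in>V - {x}. \<delta> ^ (card (P x y) - 1) * UG (P x y) S)"
  proof (rule sum.mono_neutral_left)
    show "finite V" using finV .
    show "S \<subseteq> V" using SV .
    show "\<forall>x\<in>V - S. (\<Sum>y\<in>V - {x}. \<delta> ^ (card (P x y) - 1) * UG (P x y) S) = 0"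
      unfolding UG_def P_def by auto
  qed
  finally show ?thesis .
qed

lemma shapley_UG:
  assumes "finite X" "T \<subseteq> X" "j \<in> X"
  shows "shapley X (UG T) j = (if j \<in> T then 1 / card T else 0)"
  using unanimity_in[OF assms(1,2)] unanimity_out[of j T X] unfolding UG_def[abs_def] by auto

lemma bpower_formula:
  assumes iV: "i \<in> V" and jV: "j \<in> V" and ji: "j \<noteq> i"
  shows "bpower \<delta> E E V j i = (\<Sum>x\<in>V. \<Sum>y\<in>V - {x}.
     (if i \<in> P x y \<and> j \<in> P x y then \<delta> ^ (card (P x y) - 1) / card (P x y) else 0))"
proof -
  let ?c = "\<lambda>x y. \<delta> ^ (card (P x y) - 1)"
  have s1: "shapley V (rH \<delta> E E) j = shapley V (\<lambda>S. \<Sum>x\<in>V. \<Sum>y\<in>V - {x}. ?c x y * UG (P x y) S) j"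
  proof (rule shapley_cong[OF jV])
    fix S assume SV: "S \<subseteq> V"
    then have "finite S" using finV finite_subset by blast
    then show "rH \<delta> E E S = (\<Sum>x\<in>V. \<Sum>y\<in>V - {x}. ?c x y * UG (P x y) S)"
      using rH_eq_vG[of E, OF Eform] vG_formula[OF SV] by simp
  qed
  also have "\<dots> = (\<Sum>x\<in>V. \<Sum>y\<in>V - {x}. ?c x y * shapley V (UG (P x y)) j)"
    by (simp only: shapley_sum shapley_scale)
  also have "\<dots> = (\<Sum>x\<in>V. \<Sum>y\<in>V - {x}. ?c x y * (if j \<in> P x y then 1 / card (P x y) else 0))"
    using shapley_UG[OF finV P_sub jV] by (intro sum.cong refl) auto
  finally have A: "shapley V (rH \<delta> E E) j = \<dots>" .
  have jX: "j \<in> V - {i}" using jV ji by simp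
  have s2: "shapley (V - {i}) (rH \<delta> E (restrict_conf E (V - {i}))) j
     = shapley (V - {i}) (\<lambda>S. \<Sum>x\<in>V. \<Sum>y\<in>V - {x}. (if i \<in> P x y then 0 else ?c x y) * UG (P x y) S) j"
  proof (rule shapley_cong[OF jX])
    fix S assume SV: "S \<subseteq> V - {i}"
    then have "finite S" using finV finite_subset by blast
    then have "rH \<delta> E (restrict_conf E (V - {i})) S = (\<Sum>x\<in>V. \<Sum>y\<in>V - {x}. ?c x y * UG (P x y) S)"
    proof -
      have SV': "S \<subseteq> V" using SV by auto
      show ?thesis using rH_restrict[OF SV] rH_eq_vG[of E, OF Eform] vG_formula[OF SV'] \<open>finite S\<close> by simp
    qed
    also have "\<dots> = (\<Sum>x\<in>V. \<Sum>y\<in>V - {x}. (if i \<in> P x y then 0 else ?c x y) * UG (P x y) S)"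
      using SV unfolding UG_def by (intro sum.cong refl) auto
    finally show "rH \<delta> E (restrict_conf E (V - {i})) S = \<dots>" .
  qed
  also have "\<dots> = (\<Sum>x\<in>V. \<Sum>y\<in>V - {x}. (if i \<in> P x y then 0 else ?c x y) * shapley (V - {i}) (UG (P x y)) j)"
    by (simp only: shapley_sum shapley_scale)
  also have "\<dots> = (\<Sum>x\<in>V. \<Sum>y\<in>V - {x}. (if i \<in> P x y then 0 else ?c x y * (if j \<in> P x y then 1 / card (P x y) else 0)))"
  proof (intro sum.cong refl)
    fix x y assume "x \<in> V" "y \<in> V - {x}"
    then have PV: "P x y \<subseteq> V" using P_sub by auto
    show "(if i \<in> P x y then 0 else ?c x y) * shapley (V - {i}) (UG (P x y)) j =
        (if i \<in> P x y then 0 else ?c x y * (if j \<in> P x y then 1 / card (P x y) else 0))"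
    proof (cases "i \<in> P x y")
      case False
      then have "P x y \<subseteq> V - {i}" using PV by auto
      then show ?thesis using False shapley_UG[of "V - {i}" "P x y" j] finV jX by simp
    qed simp
  qed
  finally have B: "shapley (V - {i}) (rH \<delta> E (restrict_conf E (V - {i}))) j = \<dots>" .
  show ?thesis unfolding bpower_def A B sum_subtractf[symmetric]
    by (intro sum.cong refl) auto
qed

end



definition htree :: "nat \<Rightarrow> nat \<Rightarrow> nat" where
  "htree k x = (if x = 1 \<or> k + 2 \<le> x then 1 else 0)"

lemma tree_Eiff:
  "{p, q} \<in> treeE k l \<longleftrightarrow> p \<noteq> q \<and> p \<in> treeV k l \<and> q \<in> treeV k l \<and>
     (q = htree k p \<or> p = htree k q \<or> (htree k p = p \<and> htree k q = q))"
  unfolding treeE_def treeV_def htree_def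
  by (auto simp: doubleton_eq_iff)

lemma hub_tree: "hubgraph (treeV k l) (treeE k l) (htree k)"
proof
  show "finite (treeV k l)" unfolding treeV_def by simp
  show "\<And>x. x \<in> treeV k l \<Longrightarrow> htree k x \<in> treeV k l" unfolding treeV_def htree_def by auto
  show "\<And>x. x \<in> treeV k l \<Longrightarrow> htree k (htree k x) = htree k x" unfolding htree_def by auto
  show "\<And>e. e \<in> treeE k l \<Longrightarrow> \<exists>p q. e = {p, q}" unfolding treeE_def by auto
  show "\<And>p q. ({p, q} \<in> treeE k l) = (p \<noteq> q \<and> p \<in> treeV k l \<and> q \<in> treeV k l \<and>
     (q = htree k p \<or> p = htree k q \<or> htree k p = p \<and> htree k q = q))" by (rule tree_Eiff)
qed

lemma star_Eiff:
  "{p, q} \<in> starE m \<longleftrightarrow> p \<noteq> q \<and> p \<in> starV m \<and> q \<in> starV m \<and>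
     (q = (\<lambda>_. 0) p \<or> p = (\<lambda>_. 0::nat) q \<or> ((\<lambda>_. 0) p = p \<and> (\<lambda>_. 0) q = q))"
  unfolding starE_def starV_def
  by (auto simp: doubleton_eq_iff)

lemma hub_star: "hubgraph (starV m) (starE m) (\<lambda>_. 0)"
proof
  show "finite (starV m)" unfolding starV_def by simp
  show "\<And>x. x \<in> starV m \<Longrightarrow> 0 \<in> starV m" unfolding starV_def by auto
  show "\<And>x. x \<in> starV m \<Longrightarrow> (0::nat) = 0" by simp
  show "\<And>e. e \<in> starE m \<Longrightarrow> \<exists>p q. e = {p, q}" unfolding starE_def by auto
  show "\<And>p q. ({p, q} \<in> starE m) = (p \<noteq> q \<and> p \<in> starV m \<and> q \<in> starV m \<and>
     (q = 0 \<or> p = 0 \<or> 0 = p \<and> 0 = q))" using star_Eiff by simp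
qed


definition GF :: "(nat \<Rightarrow> nat) \<Rightarrow> nat \<Rightarrow> nat \<Rightarrow> real \<Rightarrow> nat \<Rightarrow> nat \<Rightarrow> real" where
  "GF h i j \<delta> x y = (if i \<in> {x, h x, h y, y} \<and> j \<in> {x, h x, h y, y}
     then \<delta> ^ (card {x, h x, h y, y} - 1) / card {x, h x, h y, y} else 0)"

lemma bpower_GF:
  assumes "hubgraph V E h" "i \<in> V" "j \<in> V" "j \<noteq> i"
  shows "bpower \<delta> E E V j i = (\<Sum>x\<in>V. \<Sum>y\<in>V - {x}. GF h i j \<delta> x y)"
  using hubgraph.bpower_formula[OF assms, unfolded hubgraph.P_def[OF assms(1)]] unfolding GF_def by simp

lemma GF_sym: "GF h i j \<delta> x y = GF h i j \<delta> y x"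
proof -
  have "{x, h x, h y, y} = {y, h y, h x, x}" by auto
  then show ?thesis unfolding GF_def by simp
qed

lemma sum_sym_at:
  fixes g :: "nat \<Rightarrow> nat \<Rightarrow> real"
  assumes fV: "finite V" and aV: "a \<in> V" and sym: "\<And>x y. g x y = g y x"
    and z: "\<And>x y. x \<in> V \<Longrightarrow> y \<in> V \<Longrightarrow> x \<noteq> y \<Longrightarrow> x \<noteq> a \<Longrightarrow> y \<noteq> a \<Longrightarrow> g x y = 0"
  shows "(\<Sum>x\<in>V. \<Sum>y\<in>V - {x}. g x y) = 2 * (\<Sum>y\<in>V - {a}. g a y)"
proof -
  have "(\<Sum>x\<in>V. \<Sum>y\<in>V - {x}. g x y) = (\<Sum>y\<in>V - {a}. g a y) + (\<Sum>x\<in>V - {a}. \<Sum>y\<in>V - {x}. g x y)"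
    using sum.remove[OF fV aV] by simp
  also have "(\<Sum>x\<in>V - {a}. \<Sum>y\<in>V - {x}. g x y) = (\<Sum>x\<in>V - {a}. g a x)"
  proof (rule sum.cong[OF refl])
    fix x assume x: "x \<in> V - {a}"
    have a': "a \<in> V - {x}" using x aV by auto
    have "(\<Sum>y\<in>V - {x}. g x y) = g x a + (\<Sum>y\<in>V - {x} - {a}. g x y)"
      using sum.remove[OF _ a', of "g x"] fV by simp
    also have "(\<Sum>y\<in>V - {x} - {a}. g x y) = 0"
      using x z by (intro sum.neutral) auto
    finally show "(\<Sum>y\<in>V - {x}. g x y) = g a x" using sym by simp
  qed
  finally show ?thesis by simp
qed

lemma sum_if_pt:
  fixes c1 c2 :: real
  assumes "finite A" "a \<in> A"
  shows "(\<Sum>y\<in>A. if y = a then c1 else c2) = c1 + real (card A - 1) * c2"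
proof -
  have "(\<Sum>y\<in>A. if y = a then c1 else c2) = c1 + (\<Sum>y\<in>A - {a}. if y = a then c1 else c2)"
    using sum.remove[OF assms, of "\<lambda>y. if y = a then c1 else c2"] by (simp only: if_True simp_thms)
  also have "(\<Sum>y\<in>A - {a}. if y = a then c1 else c2) = (\<Sum>y\<in>A - {a}. c2)"
    by (rule sum.cong) auto
  also have "\<dots> = real (card A - 1) * c2" using assms by (simp add: card_Diff_singleton)
  finally show ?thesis .
qed

lemma treeV_split:
  "treeV k l = insert 0 (insert 1 ({2..<k+2} \<union> {k+2..<k+l+2}))"
  unfolding treeV_def by auto

lemma sum_treeV:
  fixes f :: "nat \<Rightarrow> real"
  shows "(\<Sum>y\<in>treeV k l. f y) = f 0 + f 1 + (\<Sum>y\<in>{2..<k+2}. f y) + (\<Sum>y\<in>{k+2..<k+l+2}. f y)"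
proof -
  have "(\<Sum>y\<in>treeV k l. f y) = (\<Sum>y\<in>insert 0 (insert 1 ({2..<k+2} \<union> {k+2..<k+l+2})). f y)"
    by (simp only: treeV_split)
  also have "\<dots> = f 0 + (\<Sum>y\<in>insert 1 ({2..<k+2} \<union> {k+2..<k+l+2}). f y)"
    by (rule sum.insert) auto
  also have "(\<Sum>y\<in>insert 1 ({2..<k+2} \<union> {k+2..<k+l+2}). f y) = f 1 + (\<Sum>y\<in>{2..<k+2} \<union> {k+2..<k+l+2}. f y)"
    by (rule sum.insert) auto
  also have "(\<Sum>y\<in>{2..<k+2} \<union> {k+2..<k+l+2}. f y) = (\<Sum>y\<in>{2..<k+2}. f y) + (\<Sum>y\<in>{k+2..<k+l+2}. f y)"
    by (rule sum.union_disjoint) auto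
  finally show ?thesis by simp
qed

lemma tree_ab:
  assumes a: "a \<in> {2..<k + 2}" and b: "b \<in> {k + 2..<k + l + 2}" and d: "0 < \<delta>"
  shows "bpower \<delta> (treeE k l) (treeE k l) (treeV k l) a b = \<delta>^3 / 2"
proof -
  have aV: "a \<in> treeV k l" and bV: "b \<in> treeV k l" using a b unfolding treeV_def by auto
  have ab: "a \<noteq> b" using a b by auto
  have "bpower \<delta> (treeE k l) (treeE k l) (treeV k l) a b = (\<Sum>x\<in>treeV k l. \<Sum>y\<in>treeV k l - {x}. GF (htree k) b a \<delta> x y)"
    using bpower_GF[OF hub_tree bV aV ab] .
  also have "\<dots> = 2 * (\<Sum>y\<in>treeV k l - {a}. GF (htree k) b a \<delta> a y)"
  proof (rule sum_sym_at)
    show "finite (treeV k l)" unfolding treeV_def by simp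
    show "a \<in> treeV k l" using aV .
    show "\<And>x y. GF (htree k) b a \<delta> x y = GF (htree k) b a \<delta> y x" by (rule GF_sym)
    show "\<And>x y. x \<noteq> a \<Longrightarrow> y \<noteq> a \<Longrightarrow> GF (htree k) b a \<delta> x y = 0"
      using a unfolding GF_def htree_def by auto
  qed
  also have "(\<Sum>y\<in>treeV k l - {a}. GF (htree k) b a \<delta> a y) = (\<Sum>y\<in>treeV k l - {a}. if y = b then \<delta>^3/4 else 0)"
  proof (rule sum.cong[OF refl])
    fix y assume y: "y \<in> treeV k l - {a}"
    show "GF (htree k) b a \<delta> a y = (if y = b then \<delta>^3/4 else 0)"
    proof (cases "y = b")
      case True
      have "card {a, htree k a, htree k b, b} = 4" using a b unfolding htree_def by auto
      then show ?thesis using True unfolding GF_def by (simp add: numeral_eq_Suc)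
    next
      case False
      then show ?thesis using a b unfolding GF_def htree_def by auto
    qed
  qed
  also have "\<dots> = \<delta>^3/4" using bV ab unfolding treeV_def by simp
  finally show ?thesis by simp
qed


lemma tree_0a:
  assumes a: "a \<in> {2..<k + 2}" and l1: "l \<ge> 1"
  shows "bpower \<delta> (treeE k l) (treeE k l) (treeV k l) 0 a
           = \<delta> + 2 * real k / 3 * \<delta>^2 + real l / 2 * \<delta>^3"
proof -
  have aV: "a \<in> treeV k l" and oV: "0 \<in> treeV k l" using a unfolding treeV_def by auto
  have a0: "(0::nat) \<noteq> a" using a by auto
  have fV: "finite (treeV k l)" unfolding treeV_def by simp
  let ?f = "GF (htree k) a 0 \<delta> a"
  have "bpower \<delta> (treeE k l) (treeE k l) (treeV k l) 0 a = (\<Sum>x\<in>treeV k l. \<Sum>y\<in>treeV k l - {x}. GF (htree k) a 0 \<delta> x y)"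
    using bpower_GF[OF hub_tree aV oV a0] .
  also have "\<dots> = 2 * (\<Sum>y\<in>treeV k l - {a}. ?f y)"
  proof (rule sum_sym_at[OF fV aV])
    show "\<And>x y. GF (htree k) a 0 \<delta> x y = GF (htree k) a 0 \<delta> y x" by (rule GF_sym)
    show "\<And>x y. x \<noteq> a \<Longrightarrow> y \<noteq> a \<Longrightarrow> GF (htree k) a 0 \<delta> x y = 0"
      using a unfolding GF_def htree_def by auto
  qed
  also have "(\<Sum>y\<in>treeV k l - {a}. ?f y) = (\<Sum>y\<in>treeV k l. ?f y) - ?f a"
    using sum_diff1[of "treeV k l" ?f a] fV aV by simp
  also have "(\<Sum>y\<in>treeV k l. ?f y) = ?f 0 + ?f 1 + (\<Sum>y\<in>{2..<k+2}. ?f y) + (\<Sum>y\<in>{k+2..<k+l+2}. ?f y)"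
    by (rule sum_treeV)
  also have "?f 0 = \<delta> / 2" using a unfolding GF_def htree_def by simp
  also have "?f 1 = \<delta>^2 / 3" using a unfolding GF_def htree_def by (simp add: numeral_eq_Suc)
  also have "?f a = \<delta> / 2"
  proof -
    have h: "htree k a = 0" using a by (simp add: htree_def)
    have "{a, 0, 0, a} = {a, (0::nat)}" by auto
    then show ?thesis using a unfolding GF_def h by simp
  qed
  also have "(\<Sum>y\<in>{2..<k+2}. ?f y) = (\<Sum>y\<in>{2..<k+2}. if y = a then \<delta> / 2 else \<delta>^2 / 3)"
  proof (rule sum.cong[OF refl])
    fix y assume y: "y \<in> {2..<k+2}"
    have s: "{a, 0::nat, a} = {a, 0}" by auto
    show "?f y = (if y = a then \<delta> / 2 else \<delta>^2 / 3)"
      using a y unfolding GF_def htree_def by (auto simp: numeral_eq_Suc s)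
  qed
  also have "\<dots> = \<delta> / 2 + real (k - 1) * (\<delta>^2 / 3)"
    using sum_if_pt[of "{2..<k+2}" a "\<delta> / 2" "\<delta>^2 / 3"] a by simp
  also have "(\<Sum>y\<in>{k+2..<k+l+2}. ?f y) = (\<Sum>y\<in>{k+2..<k+l+2}. \<delta>^3 / 4)"
  proof (rule sum.cong[OF refl])
    fix y assume y: "y \<in> {k+2..<k+l+2}"
    have "card {a, 0, 1, y} = 4" using a y by auto
    then show "?f y = \<delta>^3 / 4"
      using a y unfolding GF_def htree_def by (simp add: numeral_eq_Suc)
  qed
  also have "\<dots> = real l * (\<delta>^3 / 4)" by simp
  finally show ?thesis using a by (simp add: of_nat_diff field_simps)
qed

lemma tree_01:
  assumes k1: "k \<ge> 1" and l1: "l \<ge> 1"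
  shows "bpower \<delta> (treeE k l) (treeE k l) (treeV k l) 0 1
           = \<delta> + 2 / 3 * real (k + l) * \<delta>^2 + real (k * l) / 2 * \<delta>^3"
proof -
  have iV: "1 \<in> treeV k l" and oV: "0 \<in> treeV k l" unfolding treeV_def by auto
  have fV: "finite (treeV k l)" unfolding treeV_def by simp
  let ?g = "GF (htree k) 1 0 \<delta>"
  define F where "F x = (\<Sum>y\<in>treeV k l. ?g x y)" for x
  have "bpower \<delta> (treeE k l) (treeE k l) (treeV k l) 0 1 = (\<Sum>x\<in>treeV k l. \<Sum>y\<in>treeV k l - {x}. ?g x y)"
    using bpower_GF[OF hub_tree iV oV] by simp
  also have "\<dots> = (\<Sum>x\<in>treeV k l. F x)"
  proof (rule sum.cong[OF refl])
    fix x assume x: "x \<in> treeV k l"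
    have "?g x x = 0" unfolding GF_def htree_def by auto
    then show "(\<Sum>y\<in>treeV k l - {x}. ?g x y) = F x"
      unfolding F_def using sum_diff1[of "treeV k l" "?g x" x] fV x by simp
  qed
  also have "\<dots> = F 0 + F 1 + (\<Sum>x\<in>{2..<k+2}. F x) + (\<Sum>x\<in>{k+2..<k+l+2}. F x)"
    by (rule sum_treeV)
  also have "F 0 = \<delta> / 2 + real l * (\<delta>^2 / 3)"
  proof -
    have "F 0 = ?g 0 0 + ?g 0 1 + (\<Sum>y\<in>{2..<k+2}. ?g 0 y) + (\<Sum>y\<in>{k+2..<k+l+2}. ?g 0 y)"
      unfolding F_def by (rule sum_treeV)
    also have "?g 0 0 = 0" unfolding GF_def htree_def by simp
    also have "?g 0 1 = \<delta> / 2" unfolding GF_def htree_def by simp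
    also have "(\<Sum>y\<in>{2..<k+2}. ?g 0 y) = 0" unfolding GF_def htree_def by (intro sum.neutral) auto
    also have "(\<Sum>y\<in>{k+2..<k+l+2}. ?g 0 y) = (\<Sum>y\<in>{k+2..<k+l+2}. \<delta>^2 / 3)"
      unfolding GF_def htree_def by (intro sum.cong refl) (auto simp: numeral_eq_Suc)
    finally show ?thesis by simp
  qed
  also have "F 1 = \<delta> / 2 + real k * (\<delta>^2 / 3)"
  proof -
    have "F 1 = ?g 1 0 + ?g 1 1 + (\<Sum>y\<in>{2..<k+2}. ?g 1 y) + (\<Sum>y\<in>{k+2..<k+l+2}. ?g 1 y)"
      unfolding F_def by (rule sum_treeV)
    also have "?g 1 1 = 0" unfolding GF_def htree_def by simp
    also have "?g 1 0 = \<delta> / 2" unfolding GF_def htree_def by simp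
    also have "(\<Sum>y\<in>{k+2..<k+l+2}. ?g 1 y) = 0" unfolding GF_def htree_def by (intro sum.neutral) auto
    also have "(\<Sum>y\<in>{2..<k+2}. ?g 1 y) = (\<Sum>y\<in>{2..<k+2}. \<delta>^2 / 3)"
      unfolding GF_def htree_def by (intro sum.cong refl) (auto simp: numeral_eq_Suc)
    finally show ?thesis by simp
  qed
  also have "(\<Sum>x\<in>{2..<k+2}. F x) = (\<Sum>x\<in>{2..<k+2}. \<delta>^2 / 3 + real l * (\<delta>^3 / 4))"
  proof (rule sum.cong[OF refl])
    fix x assume x: "x \<in> {2..<k+2}"
    have "F x = ?g x 0 + ?g x 1 + (\<Sum>y\<in>{2..<k+2}. ?g x y) + (\<Sum>y\<in>{k+2..<k+l+2}. ?g x y)"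
      unfolding F_def by (rule sum_treeV)
    also have "?g x 0 = 0" using x unfolding GF_def htree_def by simp
    also have "?g x 1 = \<delta>^2 / 3" using x unfolding GF_def htree_def by (simp add: numeral_eq_Suc)
    also have "(\<Sum>y\<in>{2..<k+2}. ?g x y) = 0" using x unfolding GF_def htree_def by (intro sum.neutral) auto
    also have "(\<Sum>y\<in>{k+2..<k+l+2}. ?g x y) = (\<Sum>y\<in>{k+2..<k+l+2}. \<delta>^3 / 4)"
    proof (rule sum.cong[OF refl])
      fix y assume y: "y \<in> {k+2..<k+l+2}"
      have "card {x, 0, 1, y} = 4" using x y by auto
      then show "?g x y = \<delta>^3 / 4" using x y unfolding GF_def htree_def by (simp add: numeral_eq_Suc)
    qed
    finally show "F x = \<delta>^2 / 3 + real l * (\<delta>^3 / 4)" by simp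
  qed
  also have "(\<Sum>x\<in>{k+2..<k+l+2}. F x) = (\<Sum>x\<in>{k+2..<k+l+2}. \<delta>^2 / 3 + real k * (\<delta>^3 / 4))"
  proof (rule sum.cong[OF refl])
    fix x assume x: "x \<in> {k+2..<k+l+2}"
    have "F x = ?g x 0 + ?g x 1 + (\<Sum>y\<in>{2..<k+2}. ?g x y) + (\<Sum>y\<in>{k+2..<k+l+2}. ?g x y)"
      unfolding F_def by (rule sum_treeV)
    also have "?g x 1 = 0" using x unfolding GF_def htree_def by simp
    also have "?g x 0 = \<delta>^2 / 3" using x unfolding GF_def htree_def by (simp add: numeral_eq_Suc)
    also have "(\<Sum>y\<in>{k+2..<k+l+2}. ?g x y) = 0" using x unfolding GF_def htree_def by (intro sum.neutral) auto
    also have "(\<Sum>y\<in>{2..<k+2}. ?g x y) = (\<Sum>y\<in>{2..<k+2}. \<delta>^3 / 4)"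
    proof (rule sum.cong[OF refl])
      fix y assume y: "y \<in> {2..<k+2}"
      have "card {x, 1, 0, y} = 4" using x y by auto
      then show "?g x y = \<delta>^3 / 4" using x y unfolding GF_def htree_def by (simp add: numeral_eq_Suc)
    qed
    finally show "F x = \<delta>^2 / 3 + real k * (\<delta>^3 / 4)" by simp
  qed
  finally show ?thesis by (simp add: field_simps)
qed

lemma star_0c:
  assumes c: "c \<in> {1..k + l + 1}"
  shows "bpower \<delta> (starE (k + l + 1)) (starE (k + l + 1)) (starV (k + l + 1)) 0 c
           = \<delta> + 2 / 3 * real (k + l) * \<delta>^2"
proof -
  let ?m = "k + l + 1"
  have cV: "c \<in> starV ?m" and oV: "0 \<in> starV ?m" using c unfolding starV_def by auto
  have c0: "(0::nat) \<noteq> c" using c by auto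
  have fV: "finite (starV ?m)" unfolding starV_def by simp
  let ?f = "GF (\<lambda>_. 0) c 0 \<delta> c"
  have "bpower \<delta> (starE ?m) (starE ?m) (starV ?m) 0 c = (\<Sum>x\<in>starV ?m. \<Sum>y\<in>starV ?m - {x}. GF (\<lambda>_. 0) c 0 \<delta> x y)"
    using bpower_GF[OF hub_star cV oV c0] .
  also have "\<dots> = 2 * (\<Sum>y\<in>starV ?m - {c}. ?f y)"
  proof (rule sum_sym_at[OF fV cV])
    show "\<And>x y. GF (\<lambda>_. 0) c 0 \<delta> x y = GF (\<lambda>_. 0) c 0 \<delta> y x" by (rule GF_sym)
    show "\<And>x y. x \<noteq> c \<Longrightarrow> y \<noteq> c \<Longrightarrow> GF (\<lambda>_. 0) c 0 \<delta> x y = 0"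
      using c unfolding GF_def by auto
  qed
  also have "(\<Sum>y\<in>starV ?m - {c}. ?f y) = (\<Sum>y\<in>starV ?m - {c}. if y = 0 then \<delta> / 2 else \<delta>^2 / 3)"
  proof (rule sum.cong[OF refl])
    fix y assume y: "y \<in> starV ?m - {c}"
    show "?f y = (if y = 0 then \<delta> / 2 else \<delta>^2 / 3)"
      using c y unfolding GF_def by (auto simp: numeral_eq_Suc)
  qed
  also have "\<dots> = \<delta> / 2 + real (card (starV ?m - {c}) - 1) * (\<delta>^2 / 3)"
    using sum_if_pt[of "starV ?m - {c}" 0 "\<delta> / 2" "\<delta>^2 / 3"] fV oV c0 by simp
  also have "card (starV ?m - {c}) = k + l + 1" using cV unfolding starV_def by simp
  finally show ?thesis by (simp add: field_simps)
qed




lemma beta_anti: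
  assumes "1 \<le> n" "n \<le> m"
  shows "beta m \<le> beta n"
proof -
  have le: "2 * real n * (real n + 1) \<le> 2 * real m * (real m + 1)"
    using assms by (intro mult_mono) auto
  have p1: "0 < 2 * real n * (real n + 1)" using assms by simp
  have p2: "0 < 2 * real m * (real m + 1)" using assms by simp
  show ?thesis unfolding beta_def
    by (rule divide_left_mono[OF le]) (simp_all only: mult_pos_pos[OF p2 p1] zero_le_one)
qed

lemma Nb_spec:
  assumes b: "0 < b"
  shows "Nb b \<ge> 1 \<and> beta (Nb b) \<le> b \<and> (Nb b = 1 \<or> b < beta (Nb b - 1))"
proof -
  let ?Q = "\<lambda>N. N \<ge> 1 \<and> beta N \<le> b"
  obtain n :: nat where n: "1 / b < real n" using reals_Archimedean2 by blast
  define N1 where "N1 = max 1 n"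
  have "beta N1 \<le> 1 / real N1"
  proof -
    have x1: "1 \<le> real N1" unfolding N1_def by auto
    have eq: "2 * real N1 * (real N1 + 1) = real N1 + (real N1 + 2 * (real N1 * real N1))"
      by (simp add: algebra_simps)
    have "0 \<le> real N1 * real N1" by simp
    then have le: "real N1 \<le> 2 * real N1 * (real N1 + 1)" unfolding eq using x1 by linarith
    have p1: "0 < real N1" using x1 by simp
    have p2: "0 < 2 * real N1 * (real N1 + 1)" using x1 by simp
    show ?thesis unfolding beta_def
      by (rule divide_left_mono[OF le]) (simp_all only: mult_pos_pos[OF p2 p1] zero_le_one)
  qed
  also have "1 / real N1 \<le> b"
  proof -
    have "1 / b < real N1" using n unfolding N1_def by auto
    then have "1 < b * real N1" using b by (simp add: field_simps)
    then show ?thesis using b unfolding N1_def by (simp add: field_simps)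
  qed
  finally have Q1: "?Q N1" unfolding N1_def by auto
  define N0 where "N0 = (LEAST N. ?Q N)"
  have Q0: "?Q N0" unfolding N0_def using Q1 by (rule LeastI)
  have P0: "N0 \<ge> 1 \<and> beta N0 \<le> b \<and> (N0 = 1 \<or> b < beta (N0 - 1))"
  proof (cases "N0 = 1")
    case False
    then have "N0 - 1 < N0" "N0 - 1 \<ge> 1" using Q0 by auto
    then have "\<not> ?Q (N0 - 1)" unfolding N0_def using not_less_Least by blast
    then have "b < beta (N0 - 1)" using \<open>N0 - 1 \<ge> 1\<close> by auto
    then show ?thesis using Q0 by auto
  qed (use Q0 in auto)
  have uniq: "N = N0" if PN: "N \<ge> 1 \<and> beta N \<le> b \<and> (N = 1 \<or> b < beta (N - 1))" for N
  proof (rule ccontr)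
    assume "N \<noteq> N0"
    then consider "N < N0" | "N0 < N" by linarith
    then show False
    proof cases
      case 1
      then have "b < beta (N0 - 1)" using P0 PN by auto
      moreover have "beta (N0 - 1) \<le> beta N" using beta_anti[of N "N0 - 1"] 1 PN by auto
      ultimately show False using PN by auto
    next
      case 2
      then have "b < beta (N - 1)" using P0 PN by auto
      moreover have "beta (N - 1) \<le> beta N0" using beta_anti[of N0 "N - 1"] 2 P0 by auto
      ultimately show False using P0 by auto
    qed
  qed
  have "Nb b = N0" unfolding Nb_def
  proof (rule the_equality)
    show "N0 \<ge> 1 \<and> beta N0 \<le> b \<and> (N0 = 1 \<or> b < beta (N0 - 1))" using P0 .
    fix N assume "N \<ge> 1 \<and> beta N \<le> b \<and> (N = 1 \<or> b < beta (N - 1))"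
    then show "N = N0" by (rule uniq)
  qed
  then show ?thesis using P0 by simp
qed

lemma Nb_antimono:
  assumes "0 < b'" "b' \<le> b"
  shows "Nb b \<le> Nb b'"
proof (rule ccontr)
  assume "\<not> Nb b \<le> Nb b'"
  then have lt: "Nb b' < Nb b" by simp
  have s: "Nb b \<ge> 1 \<and> beta (Nb b) \<le> b \<and> (Nb b = 1 \<or> b < beta (Nb b - 1))"
    using Nb_spec assms by auto
  have s': "Nb b' \<ge> 1 \<and> beta (Nb b') \<le> b' \<and> (Nb b' = 1 \<or> b' < beta (Nb b' - 1))"
    using Nb_spec assms by auto
  have "b < beta (Nb b - 1)" using s s' lt by auto
  moreover have "beta (Nb b - 1) \<le> beta (Nb b')" using beta_anti[of "Nb b'" "Nb b - 1"] s' lt by auto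
  ultimately show False using s' assms by auto
qed

theorem mainTheorem10:
  fixes k l :: nat and \<delta> :: real and a b c :: nat
  assumes "k \<ge> 1" and "l \<ge> 1" and "0 < \<delta>" and "\<delta> < 1"
    and "a \<in> {2..<k + 2}" and "b \<in> {k + 2..<k + l + 2}" and "c \<in> {1..k + l + 1}"
  shows "bpower \<delta> (treeE k l) (treeE k l) (treeV k l) 0 1
           = \<delta> + 2 / 3 * real (k + l) * \<delta>^2 + real (k * l) / 2 * \<delta>^3
    \<and> bpower \<delta> (starE (k + l + 1)) (starE (k + l + 1)) (starV (k + l + 1)) 0 c
           = \<delta> + 2 / 3 * real (k + l) * \<delta>^2
    \<and> bpower \<delta> (treeE k l) (treeE k l) (treeV k l) 0 a
           = \<delta> + 2 * real k / 3 * \<delta>^2 + real l / 2 * \<delta>^3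
    \<and> bpower \<delta> (treeE k l) (treeE k l) (treeV k l) a b = \<delta>^3 / 2
    \<and> bpower \<delta> (treeE k l) (treeE k l) (treeV k l) 0 1
           > bpower \<delta> (starE (k + l + 1)) (starE (k + l + 1)) (starV (k + l + 1)) 0 c
    \<and> bpower \<delta> (treeE k l) (treeE k l) (treeV k l) a b
           < bpower \<delta> (treeE k l) (treeE k l) (treeV k l) 0 a
    \<and> bpower \<delta> (treeE k l) (treeE k l) (treeV k l) a b
           < bpower \<delta> (treeE k l) (treeE k l) (treeV k l) 0 1
    \<and> Nb (bpower \<delta> (treeE k l) (treeE k l) (treeV k l) a b)
           \<ge> Nb (bpower \<delta> (treeE k l) (treeE k l) (treeV k l) 0 a)
    \<and> Nb (bpower \<delta> (treeE k l) (treeE k l) (treeV k l) a b)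
           \<ge> Nb (bpower \<delta> (treeE k l) (treeE k l) (treeV k l) 0 1)"
proof -
  have e01: "bpower \<delta> (treeE k l) (treeE k l) (treeV k l) 0 1
           = \<delta> + 2 / 3 * real (k + l) * \<delta>^2 + real (k * l) / 2 * \<delta>^3"
    using tree_01 assms by blast
  have e0c: "bpower \<delta> (starE (k + l + 1)) (starE (k + l + 1)) (starV (k + l + 1)) 0 c
           = \<delta> + 2 / 3 * real (k + l) * \<delta>^2"
    using star_0c assms by blast
  have e0a: "bpower \<delta> (treeE k l) (treeE k l) (treeV k l) 0 a
           = \<delta> + 2 * real k / 3 * \<delta>^2 + real l / 2 * \<delta>^3"
    using tree_0a assms by blast
  have eab: "bpower \<delta> (treeE k l) (treeE k l) (treeV k l) a b = \<delta>^3 / 2"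
    using tree_ab assms by blast
  have d2: "0 < \<delta>^2" "0 < \<delta>^3" using assms by auto
  have "\<delta>^2 < 1" using assms by (simp add: power_less_one_iff)
  then have "\<delta> * \<delta>^2 < \<delta> * 1" using assms by (intro mult_strict_left_mono) auto
  moreover have "\<delta>^3 = \<delta> * \<delta>^2" by (simp add: power3_eq_cube power2_eq_square)
  ultimately have d3: "\<delta>^3 < \<delta>" by simp
  have kl: "0 < real (k * l)" using assms by simp
  have i1: "bpower \<delta> (starE (k + l + 1)) (starE (k + l + 1)) (starV (k + l + 1)) 0 c
      < bpower \<delta> (treeE k l) (treeE k l) (treeV k l) 0 1"
    unfolding e01 e0c using kl d2 by simp
  have nn: "0 \<le> 2 * real k / 3 * \<delta>^2" "0 \<le> real l / 2 * \<delta>^3" "0 \<le> 2 / 3 * real (k + l) * \<delta>^2" "0 \<le> real (k * l) / 2 * \<delta>^3"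
    using d2 by auto
  have i2: "bpower \<delta> (treeE k l) (treeE k l) (treeV k l) a b < bpower \<delta> (treeE k l) (treeE k l) (treeV k l) 0 a"
    unfolding e0a eab using d3 nn d2 by linarith
  have i3: "bpower \<delta> (treeE k l) (treeE k l) (treeV k l) a b < bpower \<delta> (treeE k l) (treeE k l) (treeV k l) 0 1"
    unfolding e01 eab using d3 nn d2 by linarith
  have pab: "0 < bpower \<delta> (treeE k l) (treeE k l) (treeV k l) a b" unfolding eab using d2 by simp
  have n1: "Nb (bpower \<delta> (treeE k l) (treeE k l) (treeV k l) 0 a) \<le> Nb (bpower \<delta> (treeE k l) (treeE k l) (treeV k l) a b)"
    using Nb_antimono[OF pab] i2 by simp
  have n2: "Nb (bpower \<delta> (treeE k l) (treeE k l) (treeV k l) 0 1) \<le> Nb (bpower \<delta> (treeE k l) (treeE k l) (treeV k l) a b)"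
    using Nb_antimono[OF pab] i3 by simp
  show ?thesis using e01 e0c e0a eab i1 i2 i3 n1 n2 by simp
qed



end
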